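(* Let $\{X(t)\}_{t\ge 0}$ be generated by the voting diffusion model (defined in the context) with an arbitrary communicating pair process $\{\{i_1(t),i_2(t)\}\}$ and an arbitrary subject process $\{S(t)\}$, starting from an arbitrary (random) initial profile $X(0)\in\mathbb{R}^{m\times n}$. Then $\lim_{t\to\infty}X(t)$ exists almost surely.
   Context: Voting diffusion model: there are $m$ agents indexed by $[m]=\{1,\dots,m\}$ and $n$ candidates indexed by $[n]$. The opinion profile at time $t\in\{0,1,2,\dots\}$ is a random real $m\times n$ matrix $X(t)$, where $X_{ij}(t)$ is agent $i$'s score of candidate $j$. A communicating pair process is a sequence of random unordered pairs $\{i_1(t),i_2(t)\}$ with $i_1(t)\ne i_2(t)\in[m]$ (each measurable w.r.t. the discrete $\sigma$-algebra on the set of such pairs). A subject process is a sequence of random subsets $S(t)\subseteq[n]$ (measurable w.r.t. the power-set $\sigma$-algebra). No independence, stationarity, or adaptedness is assumed on either process; they may depend arbitrarily on the past, the future, or external randomness. The update is: $X_{ij}(t+1)=\tfrac12\big(X_{i_1(t)j}(t)+X_{i_2(t)j}(t)\big)$ if $i\in\{i_1(t),i_2(t)\}$ and $j\in S(t)$, and $X_{ij}(t+1)=X_{ij}(t)$ otherwise. *)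

theory Defs
  imports "HOL-Probability.Probability"
begin

text \<open>Agents are indexed by the finite type 'm,
candidates by the finite type 'n; an opinion profile is an m x n real matrix.
The communicating pair is an unordered pair, represented as a 2-element set P of agents.\<close>

definition voting_step ::
  "real ^ 'n ^ 'm \<Rightarrow> 'm set \<Rightarrow> 'n set \<Rightarrow> real ^ 'n ^ 'm" where
  "voting_step X P S =
     (\<chi> i j. if i \<in> P \<and> j \<in> S then (\<Sum>k\<in>P. X $ k $ j) / 2 else X $ i $ j)"

end

theory Submission imports Defs begin

lemma dec_bdd_conv:
  fixes f :: "nat \<Rightarrow> real"
  assumes "\<And>t. f (Suc t) \<le> f t" "\<And>t. lo \<le> f t"
  shows "convergent f"
proof -
  have d: "decseq f" using assms(1) by (simp add: decseq_SucI)
  have "\<bar>f t\<bar> \<le> max \<bar>lo\<bar> \<bar>f 0\<bar>" for t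
    using assms(2)[of t] decseqD[OF d, of 0 t] by auto
  then have "Bseq f" by (intro BseqI'[where K="max \<bar>lo\<bar> \<bar>f 0\<bar>"]) auto
  moreover have "monoseq f" using d by (simp add: monoseq_def decseq_def)
  ultimately show ?thesis by (rule Bseq_monoseq_convergent)
qed

definition step_ok :: "('m \<Rightarrow> real) \<Rightarrow> ('m \<Rightarrow> real) \<Rightarrow> bool" where
  "step_ok x y \<longleftrightarrow> y = x \<or> (\<exists>a b. a \<noteq> b \<and> y = (\<lambda>i. if i = a \<or> i = b then (x a + x b)/2 else x i))"

definition T :: "('m::finite \<Rightarrow> real) \<Rightarrow> nat \<Rightarrow> real" where
  "T x k = Max ((\<lambda>A. sum x A) ` {A. card A = k})"

lemma T_fin: "finite ((\<lambda>A. sum x A) ` {A :: 'm::finite set. card A = k})"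
  by simp

lemma T_ne: assumes "k \<le> CARD('m::finite)" shows "{A :: 'm set. card A = k} \<noteq> {}"
proof -
  obtain B :: "'m set" where "B \<subseteq> UNIV" "card B = k" "finite B"
    using obtain_subset_with_card_n[OF assms] by blast
  then show ?thesis by auto
qed

lemma T_ge: "card A = k \<Longrightarrow> sum x A \<le> T x k"
  unfolding T_def by (rule Max_ge[OF T_fin]) auto

lemma T_attained: fixes x :: "'m::finite \<Rightarrow> real" assumes "k \<le> CARD('m)"
  obtains A :: "'m set" where "card A = k" "T x k = sum x A"
proof -
  have "T x k \<in> (\<lambda>A. sum x A) ` {A :: 'm set. card A = k}"
    unfolding T_def by (rule Max_in[OF T_fin]) (use T_ne[OF assms] in auto)
  then show ?thesis using that by auto
qed

lemma T_le: assumes "k \<le> CARD('m::finite)" "\<And>A :: 'm set. card A = k \<Longrightarrow> sum x A \<le> c"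
  shows "T x k \<le> c"
  using T_attained[OF assms(1), of x] assms(2) by metis

lemma T_step: assumes "step_ok x y" "k \<le> CARD('m::finite)"
  shows "T y k \<le> T (x :: 'm \<Rightarrow> real) k"
proof (rule T_le[OF assms(2)])
  fix A :: "'m set" assume cA: "card A = k"
  show "sum y A \<le> T x k"
  proof (cases "y = x")
    case True then show ?thesis using T_ge[OF cA] by simp
  next
    case False
    then obtain a b where ab: "a \<noteq> b" and y: "y = (\<lambda>i. if i = a \<or> i = b then (x a + x b)/2 else x i)"
      using assms(1) unfolding step_ok_def by blast
    have fin: "finite A" by simp
    consider "a \<in> A" "b \<in> A" | "a \<notin> A" "b \<notin> A" | "a \<in> A" "b \<notin> A" | "a \<notin> A" "b \<in> A" by blast
    then show ?thesis
    proof cases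
      case 1
      have dd: "A - {a} - {b} = A - {a,b}" by auto
      have "sum y A = sum y (A - {a,b}) + (y a + y b)"
        using 1 ab by (simp add: sum.remove[of A a] sum.remove[of "A-{a}" b] insert_Diff dd)
      moreover have "sum x A = sum x (A - {a,b}) + (x a + x b)"
        using 1 ab by (simp add: sum.remove[of A a] sum.remove[of "A-{a}" b] insert_Diff dd)
      moreover have "sum y (A - {a,b}) = sum x (A - {a,b})" by (rule sum.cong) (auto simp: y)
      ultimately have "sum y A = sum x A" using y by simp
      then show ?thesis using T_ge[OF cA] by simp
    next
      case 2
      have "sum y A = sum x A" by (rule sum.cong) (use 2 in \<open>auto simp: y\<close>)
      then show ?thesis using T_ge[OF cA] by simp
    next
      case 3
      define A' where "A' = insert b (A - {a})"
      have "k > 0" using 3 cA by (auto simp: card_gt_0_iff)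
      have cA': "card A' = k" using 3 cA \<open>k > 0\<close> by (simp add: A'_def card_Diff_singleton)
      have e0: "sum y (A - {a}) = sum x (A - {a})" by (rule sum.cong) (use 3 in \<open>auto simp: y\<close>)
      have "sum y A = y a + sum y (A - {a})" using 3 by (simp add: sum.remove)
      also have "\<dots> = (sum x A + sum x A') / 2"
        using 3 e0 by (simp add: A'_def sum.remove[of A a] y)
      finally have "sum y A = (sum x A + sum x A') / 2" .
      then show ?thesis using T_ge[OF cA, of x] T_ge[OF cA', of x] by (simp add: field_simps)
    next
      case 4
      define A' where "A' = insert a (A - {b})"
      have "k > 0" using 4 cA by (auto simp: card_gt_0_iff)
      have cA': "card A' = k" using 4 cA \<open>k > 0\<close> by (simp add: A'_def card_Diff_singleton)
      have e0: "sum y (A - {b}) = sum x (A - {b})" by (rule sum.cong) (use 4 in \<open>auto simp: y\<close>)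
      have "sum y A = y b + sum y (A - {b})" using 4 by (simp add: sum.remove)
      also have "\<dots> = (sum x A + sum x A') / 2"
        using 4 e0 by (simp add: A'_def sum.remove[of A b] y)
      finally have "sum y A = (sum x A + sum x A') / 2" .
      then show ?thesis using T_ge[OF cA, of x] T_ge[OF cA', of x] by (simp add: field_simps)
    qed
  qed
qed


lemma T_top:
  fixes y :: "'m::finite \<Rightarrow> real"
  assumes sep: "\<And>i j. i \<in> A \<Longrightarrow> j \<notin> A \<Longrightarrow> y j \<le> y i"
  shows "T y (card A) = sum y A"
proof (rule antisym)
  show "T y (card A) \<le> sum y A"
  proof (rule T_le)
    show "card A \<le> CARD('m)" by (simp add: card_mono)
    fix C :: "'m set" assume cC: "card C = card A"
    have s1: "sum y C = sum y (C \<inter> A) + sum y (C - A)"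
      by (metis Diff_Diff_Int Int_Diff_Un Int_commute finite sum.Int_Diff)
    have s2: "sum y A = sum y (C \<inter> A) + sum y (A - C)"
      by (metis Int_commute finite sum.Int_Diff)
    have c1: "card C = card (C \<inter> A) + card (C - A)"
      by (metis card_Un_disjoint Diff_disjoint Int_Diff_Un Int_Diff_disjoint finite inf_commute)
    have c2: "card A = card (C \<inter> A) + card (A - C)"
      by (metis Int_commute card_Int_Diff finite)
    have cc: "card (C - A) = card (A - C)" using c1 c2 cC by simp
    have "sum y (C - A) \<le> sum y (A - C)"
    proof (cases "C - A = {}")
      case True
      then have "A - C = {}" using cc by (metis card_0_eq finite card.empty)
      with True show ?thesis by simp
    next
      case False
      define th where "th = Max (y ` (C - A))"
      have thin: "th \<in> y ` (C - A)" unfolding th_def using False by (intro Max_in) auto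
      then obtain j0 where j0: "j0 \<in> C - A" "th = y j0" by auto
      have "sum y (C - A) \<le> of_nat (card (C - A)) * th"
        using sum_bounded_above[of "C - A" y th] unfolding th_def by (auto intro: Max_ge)
      also have "\<dots> = of_nat (card (A - C)) * th" using cc by simp
      also have "\<dots> \<le> sum y (A - C)"
        using sum_bounded_below[of "A - C" th y] sep j0 by auto
      finally show ?thesis .
    qed
    then show "sum y C \<le> sum y A" using s1 s2 by simp
  qed
  show "sum y A \<le> T y (card A)" by (rule T_ge) simp
qed

lemma level:
  fixes y :: "'m::finite \<Rightarrow> real"
  shows "\<exists>a b. a < b \<and> b \<le> CARD('m) \<and> T y b - T y a = (real b - real a) * y i"
proof -
  define A where "A = {j. y j > y i}"
  define B where "B = {j. y j \<ge> y i}"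
  have AB: "A \<subset> B" unfolding A_def B_def by force
  have lt: "card A < card B" using AB by (simp add: psubset_card_mono)
  have le: "card B \<le> CARD('m)" by (simp add: card_mono)
  have TA: "T y (card A) = sum y A" by (rule T_top) (auto simp: A_def)
  have TB: "T y (card B) = sum y B" by (rule T_top) (auto simp: B_def)
  have "sum y B = sum y A + sum y (B - A)"
    using AB by (metis finite psubset_imp_subset sum.subset_diff add.commute)
  moreover have "sum y (B - A) = of_nat (card (B - A)) * y i"
  proof -
    have "sum y (B - A) = sum (\<lambda>_. y i) (B - A)"
      by (rule sum.cong) (auto simp: A_def B_def)
    then show ?thesis by simp
  qed
  moreover have "real (card (B - A)) = real (card B) - real (card A)"
    using AB by (simp add: card_Diff_subset of_nat_diff psubset_imp_subset card_mono)
  ultimately have "T y (card B) - T y (card A) = (real (card B) - real (card A)) * y i"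
    using TA TB by simp
  then show ?thesis using lt le by blast
qed


lemma step_lo: assumes "step_ok x y" "\<And>i. lo \<le> x i" shows "lo \<le> y i"
proof -
  have "lo \<le> (x a + x b)/2" for a b using assms(2)[of a] assms(2)[of b] by simp
  then show ?thesis using assms unfolding step_ok_def by auto
qed

lemma step_Q:
  fixes x y :: "'m::finite \<Rightarrow> real"
  assumes "step_ok x y"
  shows "2 * (y i - x i)^2 \<le> (\<Sum>j\<in>UNIV. (x j)^2) - (\<Sum>j\<in>UNIV. (y j)^2)"
proof (cases "y = x")
  case True then show ?thesis by simp
next
  case False
  then obtain a b where ab: "a \<noteq> b" and y: "y = (\<lambda>i. if i = a \<or> i = b then (x a + x b)/2 else x i)"
    using assms unfolding step_ok_def by blast
  have sp: "(\<Sum>j\<in>UNIV. f j) = (\<Sum>j\<in>UNIV - {a,b}. f j) + f a + f b" for f :: "'m \<Rightarrow> real"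
  proof -
    have "(\<Sum>j\<in>UNIV. f j) = (\<Sum>j\<in>UNIV - {a,b}. f j) + (\<Sum>j\<in>{a,b}. f j)"
      by (metis add.commute finite sum.subset_diff top_greatest)
    then show ?thesis using ab by simp
  qed
  have r: "(\<Sum>j\<in>UNIV - {a,b}. (y j)^2) = (\<Sum>j\<in>UNIV - {a,b}. (x j)^2)"
    by (rule sum.cong) (auto simp: y)
  have "(\<Sum>j\<in>UNIV. (x j)^2) - (\<Sum>j\<in>UNIV. (y j)^2) = (x a)^2 + (x b)^2 - 2 * ((x a + x b)/2)^2"
    using sp[of "\<lambda>j. (x j)^2"] sp[of "\<lambda>j. (y j)^2"] r ab by (simp add: y)
  also have "\<dots> = (x a - x b)^2 / 2" by (simp add: power2_eq_square field_simps)
  finally have e: "(\<Sum>j\<in>UNIV. (x j)^2) - (\<Sum>j\<in>UNIV. (y j)^2) = (x a - x b)^2 / 2" .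
  show ?thesis
  proof (cases "i = a \<or> i = b")
    case True
    then have "(y i - x i)^2 = (x a - x b)^2 / 4" using ab
      by (auto simp: y power2_eq_square field_simps)
    then show ?thesis using e by simp
  next
    case False
    then have "2 * (y i - x i)^2 = 0" by (simp add: y)
    moreover have "(x a - x b)^2 / 2 \<ge> 0" by simp
    ultimately show ?thesis using e by linarith
  qed
qed

locale dyn =
  fixes x :: "nat \<Rightarrow> 'm::finite \<Rightarrow> real"
  assumes st: "\<And>t. step_ok (x t) (x (Suc t))"
begin

definition lo where "lo = Min (range (x 0))"

lemma lo_le: "lo \<le> x t i"
proof (induction t arbitrary: i)
  case 0 then show ?case unfolding lo_def by (intro Min_le) auto
next
  case (Suc t) then show ?case using step_lo[OF st] by blast
qed

lemma T_conv: assumes "k \<le> CARD('m)" shows "convergent (\<lambda>t. T (x t) k)"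
proof (rule dec_bdd_conv[where lo="real k * lo"])
  show "T (x (Suc t)) k \<le> T (x t) k" for t by (rule T_step[OF st assms])
  fix t
  obtain A :: "'m set" where A: "card A = k"
    using T_ne[OF assms] by blast
  have "real k * lo \<le> sum (x t) A" using sum_bounded_below[of A lo "x t"] lo_le A by auto
  also have "\<dots> \<le> T (x t) k" by (rule T_ge[OF A])
  finally show "real k * lo \<le> T (x t) k" .
qed

definition Q where "Q t = (\<Sum>j\<in>UNIV. (x t j)^2)"

lemma inc_small: assumes "e > 0" shows "eventually (\<lambda>t. \<forall>i. \<bar>x (Suc t) i - x t i\<bar> < e) sequentially"
proof -
  have "convergent Q"
  proof (rule dec_bdd_conv[where lo=0])
    fix t
    have "0 \<le> 2 * (x (Suc t) undefined - x t undefined)^2" by simp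
    then show "Q (Suc t) \<le> Q t" using step_Q[OF st, of t undefined] unfolding Q_def by linarith
    show "0 \<le> Q t" unfolding Q_def by (intro sum_nonneg) simp
  qed
  then obtain q where "Q \<longlonglongrightarrow> q" by (auto simp: convergent_def)
  then have "(\<lambda>t. Q t - Q (Suc t)) \<longlonglongrightarrow> q - q"
    by (intro tendsto_diff) (auto simp: LIMSEQ_Suc)
  then have "eventually (\<lambda>t. Q t - Q (Suc t) < 2 * e^2) sequentially"
    using assms by (intro order_tendstoD) auto
  then show ?thesis
  proof (rule eventually_mono)
    fix t assume h: "Q t - Q (Suc t) < 2 * e^2"
    show "\<forall>i. \<bar>x (Suc t) i - x t i\<bar> < e"
    proof
      fix i
      have "2 * (x (Suc t) i - x t i)^2 < 2 * e^2" using step_Q[OF st, of t i] h by (simp add: Q_def)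
      then have "(x (Suc t) i - x t i)^2 < e^2" by simp
      then show "\<bar>x (Suc t) i - x t i\<bar> < e" using assms by (metis abs_le_square_iff abs_of_pos linorder_not_less order_less_le)
    qed
  qed
qed


definition tau where "tau k = lim (\<lambda>t. T (x t) k)"

definition L where "L = (\<lambda>(a,b). (tau b - tau a) / (real b - real a)) ` {(a,b). a < b \<and> b \<le> CARD('m)}"

lemma L_fin: "finite L"
proof -
  have "{(a,b). a < b \<and> b \<le> CARD('m)} \<subseteq> {..CARD('m)} \<times> {..CARD('m)}" by auto
  then have "finite {(a::nat,b). a < b \<and> b \<le> CARD('m)}" by (rule finite_subset) simp
  then show ?thesis unfolding L_def by simp
qed

lemma near_L: assumes "e > 0" shows "eventually (\<lambda>t. \<forall>i. \<exists>l\<in>L. \<bar>x t i - l\<bar> < e) sequentially"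
proof -
  have "\<forall>k\<in>{..CARD('m)}. eventually (\<lambda>t. \<bar>T (x t) k - tau k\<bar> < e/2) sequentially"
  proof
    fix k assume "k \<in> {..CARD('m)}"
    then have "(\<lambda>t. T (x t) k) \<longlonglongrightarrow> tau k" using T_conv unfolding tau_def
      by (simp add: convergent_LIMSEQ_iff)
    then show "eventually (\<lambda>t. \<bar>T (x t) k - tau k\<bar> < e/2) sequentially"
      using assms by (auto dest!: tendstoD[where e="e/2"] simp: dist_real_def)
  qed
  then have "eventually (\<lambda>t. \<forall>k\<in>{..CARD('m)}. \<bar>T (x t) k - tau k\<bar> < e/2) sequentially"
    by (rule eventually_ball_finite[rotated]) simp
  then show ?thesis
  proof (rule eventually_mono)
    fix t assume h: "\<forall>k\<in>{..CARD('m)}. \<bar>T (x t) k - tau k\<bar> < e/2"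
    show "\<forall>i. \<exists>l\<in>L. \<bar>x t i - l\<bar> < e"
    proof
      fix i
      obtain a b where ab: "a < b" "b \<le> CARD('m)" and eq: "T (x t) b - T (x t) a = (real b - real a) * x t i"
        using level[of "x t" i] by blast
      define l where "l = (tau b - tau a) / (real b - real a)"
      have lL: "l \<in> L" unfolding L_def l_def using ab by force
      have pos: "real b - real a \<ge> 1" using ab by linarith
      have ha: "\<bar>T (x t) a - tau a\<bar> < e/2" "\<bar>T (x t) b - tau b\<bar> < e/2" using h ab by auto
      have "x t i - l = ((T (x t) b - tau b) - (T (x t) a - tau a)) / (real b - real a)"
        using eq pos unfolding l_def by (simp add: field_simps)
      then have "\<bar>x t i - l\<bar> = \<bar>(T (x t) b - tau b) - (T (x t) a - tau a)\<bar> / (real b - real a)"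
        using pos by simp
      also have "\<dots> \<le> \<bar>(T (x t) b - tau b) - (T (x t) a - tau a)\<bar>"
      proof -
        let ?c = "\<bar>(T (x t) b - tau b) - (T (x t) a - tau a)\<bar>"
        have "?c * 1 \<le> ?c * (real b - real a)" using mult_left_mono[OF pos, of ?c] by simp
        then show ?thesis using pos by (simp add: divide_le_eq)
      qed
      also have "\<dots> < e" using ha by linarith
      finally show "\<exists>l\<in>L. \<bar>x t i - l\<bar> < e" using lL by blast
    qed
  qed
qed

lemma agent_conv: "convergent (\<lambda>t. x t i)"
proof -
  define D where "D = (\<lambda>(l,l'). \<bar>l - l'\<bar>) ` {(l,l'). l \<in> L \<and> l' \<in> L \<and> l \<noteq> l'}"
  have finD: "finite D" unfolding D_def
    by (rule finite_imageI, rule finite_subset[of _ "L \<times> L"]) (auto simp: L_fin)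
  define del where "del = Min (insert 1 D)"
  have delpos: "del > 0" unfolding del_def using finD by (auto simp: D_def)
  have delle: "del \<le> \<bar>l - l'\<bar>" if "l \<in> L" "l' \<in> L" "l \<noteq> l'" for l l'
    unfolding del_def using finD that by (intro Min_le) (auto simp: D_def)
  have "Cauchy (\<lambda>t. x t i)"
  proof (rule CauchyI)
    fix e :: real assume e: "e > 0"
    define eps where "eps = min (e/2) (del/3)"
    have eps: "eps > 0" using e delpos by (simp add: eps_def)
    obtain N where N: "\<And>t. t \<ge> N \<Longrightarrow> (\<forall>i. \<exists>l\<in>L. \<bar>x t i - l\<bar> < eps) \<and> (\<forall>i. \<bar>x (Suc t) i - x t i\<bar> < eps)"
      using eventually_conj[OF near_L[OF eps] inc_small[OF eps]] unfolding eventually_sequentially by blast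
    obtain l0 where l0: "l0 \<in> L" "\<bar>x N i - l0\<bar> < eps" using N[of N] by blast
    have stay: "\<bar>x t i - l0\<bar> < eps" if "t \<ge> N" for t
      using that
    proof (induction t rule: dec_induct)
      case base then show ?case using l0 by simp
    next
      case (step t)
      obtain l where l: "l \<in> L" "\<bar>x (Suc t) i - l\<bar> < eps" using N[of "Suc t"] step(1) by auto
      have "\<bar>x (Suc t) i - x t i\<bar> < eps" using N[of t] step(1) by auto
      then have "\<bar>l - l0\<bar> < del" using l step(3) unfolding eps_def by linarith
      then have "l = l0" using delle[OF l(1) l0(1)] by fastforce
      then show ?case using l by simp
    qed
    show "\<exists>M. \<forall>m\<ge>M. \<forall>n\<ge>M. norm (x m i - x n i) < e"
    proof (intro exI allI impI)
      fix m n assume "m \<ge> N" "n \<ge> N"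
      then show "norm (x m i - x n i) < e" using stay[of m] stay[of n] unfolding eps_def real_norm_def by linarith
    qed
  qed
  then show ?thesis by (simp add: Cauchy_convergent_iff)
qed

end


theorem theorem1:
  fixes M :: "'w measure"
    and X :: "nat \<Rightarrow> 'w \<Rightarrow> real ^ 'n ^ 'm"
    and P :: "nat \<Rightarrow> 'w \<Rightarrow> 'm set"
    and S :: "nat \<Rightarrow> 'w \<Rightarrow> 'n set"
  assumes "prob_space M"
    and "X 0 \<in> borel_measurable M"
    and "\<And>t. P t \<in> measurable M (count_space UNIV)"
    and "\<And>t \<omega>. card (P t \<omega>) = 2"
    and "\<And>t. S t \<in> measurable M (count_space UNIV)"
    and "\<And>t \<omega>. X (Suc t) \<omega> = voting_step (X t \<omega>) (P t \<omega>) (S t \<omega>)"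
  shows "AE \<omega> in M. convergent (\<lambda>t. X t \<omega>)"
proof (rule AE_I2)
  fix \<omega>
  have comp: "convergent (\<lambda>t. X t \<omega> $ i $ j)" for i j
  proof -
    interpret dyn "\<lambda>t i. X t \<omega> $ i $ j"
    proof
      fix t
      obtain a b where ab: "a \<noteq> b" "P t \<omega> = {a, b}" using assms(4)[of t \<omega>] card_2_iff by metis
      show "step_ok (\<lambda>i. X t \<omega> $ i $ j) (\<lambda>i. X (Suc t) \<omega> $ i $ j)"
      proof (cases "j \<in> S t \<omega>")
        case True
        then show ?thesis unfolding step_ok_def using ab
          by (intro disjI2 exI[of _ a] exI[of _ b]) (auto simp: assms(6) voting_step_def)
      next
        case False
        then show ?thesis unfolding step_ok_def by (auto simp: assms(6) voting_step_def)
      qed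
    qed
    show ?thesis by (rule agent_conv)
  qed
  define Y where "Y = (\<chi> i j. lim (\<lambda>t. X t \<omega> $ i $ j))"
  have "(\<lambda>t. X t \<omega>) \<longlonglongrightarrow> Y"
  proof (rule vec_tendstoI)
    fix i
    show "(\<lambda>t. X t \<omega> $ i) \<longlonglongrightarrow> Y $ i"
    proof (rule vec_tendstoI)
      fix j
      show "(\<lambda>t. X t \<omega> $ i $ j) \<longlonglongrightarrow> Y $ i $ j"
        using comp[of i j] unfolding Y_def by (simp add: convergent_LIMSEQ_iff)
    qed
  qed
  then show "convergent (\<lambda>t. X t \<omega>)" by (auto simp: convergent_def)
qed

end
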